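(* Let $(L_*,b)$ and $(M_*,b)$ be chain complexes, $i:(L_*,b)\to(M_*,b)$ and $p:(M_*,b)\to(L_*,b)$ chain maps, and $h$ a map of degree $+1$ on $M_*$ with $ip=1+bh+hb$. Let $\delta$ be a small perturbation, put $A=(1-\delta h)^{-1}\delta$, and define $$i_\infty=i+hAi,\quad p_\infty=p+pAh,\quad b_\infty=b+pAi.$$ Then $$b_\infty(p_\infty i-1)=(p_\infty i-1)b\qquad\text{and}\qquad (p i_\infty-1)b_\infty=b(p i_\infty-1).$$ That is, $p_\infty i-1:(L_*,b)\to(L_*,b_\infty)$ and $p i_\infty-1:(L_*,b_\infty)\to(L_*,b)$ are chain maps.
   Context: Complexes are chain complexes of modules over a ring, with differentials of degree $-1$. The data $i,p,h$ above is called a homotopy retract (HR) datum. A perturbation $\delta$ is a graded map $M_*\to M_*$ of the same degree as $b$ such that $(b+\delta)^2=0$. It is called small if $1-\delta h$ is invertible. It is known (homological perturbation lemma, HR version) that for a small perturbation, $(L_*,b_\infty)$ is a complex, that $i_\infty:(L_*,b_\infty)\to(M_*,b+\delta)$ and $p_\infty:(M_*,b+\delta)\to(L_*,b_\infty)$ are chain maps, and that $i_\infty p_\infty=1+(b+\delta)h_\infty+h_\infty(b+\delta)$, where $h_\infty=h+hAh$. *)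

theory Defs
  imports Main
begin

text \<open>Graded modules over a ring R are modelled inside an ambient R-module
(element type 'm, scalar action s) as a family of submodules M n, n :: int.
Equalities of graded maps are equalities on the carriers.\<close>

definition is_module :: "('r::ring_1 \<Rightarrow> 'm::ab_group_add \<Rightarrow> 'm) \<Rightarrow> bool" where
  "is_module s \<longleftrightarrow>
     (\<forall>a x y. s a (x + y) = s a x + s a y) \<and>
     (\<forall>a b x. s (a + b) x = s a x + s b x) \<and>
     (\<forall>a b x. s a (s b x) = s (a * b) x) \<and>
     (\<forall>x. s 1 x = x)"

definition graded_module :: "('r::ring_1 \<Rightarrow> 'm::ab_group_add \<Rightarrow> 'm) \<Rightarrow> (int \<Rightarrow> 'm set) \<Rightarrow> bool" where
  "graded_module s M \<longleftrightarrow> is_module s \<and>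
     (\<forall>n. 0 \<in> M n \<and> (\<forall>x\<in>M n. \<forall>y\<in>M n. x + y \<in> M n) \<and> (\<forall>a. \<forall>x\<in>M n. s a x \<in> M n))"

definition graded_map ::
  "('r::ring_1 \<Rightarrow> 'a::ab_group_add \<Rightarrow> 'a) \<Rightarrow> (int \<Rightarrow> 'a set) \<Rightarrow>
   ('r \<Rightarrow> 'b::ab_group_add \<Rightarrow> 'b) \<Rightarrow> (int \<Rightarrow> 'b set) \<Rightarrow> int \<Rightarrow> (int \<Rightarrow> 'a \<Rightarrow> 'b) \<Rightarrow> bool" where
  "graded_map s M s' M' d f \<longleftrightarrow>
     (\<forall>n. (\<forall>x\<in>M n. f n x \<in> M' (n + d)) \<and>
          (\<forall>x\<in>M n. \<forall>y\<in>M n. f n (x + y) = f n x + f n y) \<and>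
          (\<forall>a. \<forall>x\<in>M n. f n (s a x) = s' a (f n x)))"

definition chain_complex :: "('r::ring_1 \<Rightarrow> 'm::ab_group_add \<Rightarrow> 'm) \<Rightarrow> (int \<Rightarrow> 'm set) \<Rightarrow> (int \<Rightarrow> 'm \<Rightarrow> 'm) \<Rightarrow> bool" where
  "chain_complex s M b \<longleftrightarrow> graded_module s M \<and> graded_map s M s M (-1) b \<and>
     (\<forall>n. \<forall>x\<in>M n. b (n - 1) (b n x) = 0)"

definition chain_map ::
  "('r::ring_1 \<Rightarrow> 'a::ab_group_add \<Rightarrow> 'a) \<Rightarrow> (int \<Rightarrow> 'a set) \<Rightarrow> (int \<Rightarrow> 'a \<Rightarrow> 'a) \<Rightarrow>
   ('r \<Rightarrow> 'b::ab_group_add \<Rightarrow> 'b) \<Rightarrow> (int \<Rightarrow> 'b set) \<Rightarrow> (int \<Rightarrow> 'b \<Rightarrow> 'b) \<Rightarrow> (int \<Rightarrow> 'a \<Rightarrow> 'b) \<Rightarrow> bool" where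
  "chain_map s L bL s' M bM f \<longleftrightarrow> graded_map s L s' M 0 f \<and>
     (\<forall>n. \<forall>x\<in>L n. f (n - 1) (bL n x) = bM n (f n x))"

definition hr_datum ::
  "('r::ring_1 \<Rightarrow> 'l::ab_group_add \<Rightarrow> 'l) \<Rightarrow> (int \<Rightarrow> 'l set) \<Rightarrow> (int \<Rightarrow> 'l \<Rightarrow> 'l) \<Rightarrow>
   ('r \<Rightarrow> 'm::ab_group_add \<Rightarrow> 'm) \<Rightarrow> (int \<Rightarrow> 'm set) \<Rightarrow> (int \<Rightarrow> 'm \<Rightarrow> 'm) \<Rightarrow>
   (int \<Rightarrow> 'l \<Rightarrow> 'm) \<Rightarrow> (int \<Rightarrow> 'm \<Rightarrow> 'l) \<Rightarrow> (int \<Rightarrow> 'm \<Rightarrow> 'm) \<Rightarrow> bool" where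
  "hr_datum sL L bL sM M bM i p h \<longleftrightarrow>
     chain_complex sL L bL \<and> chain_complex sM M bM \<and>
     chain_map sL L bL sM M bM i \<and> chain_map sM M bM sL L bL p \<and>
     graded_map sM M sM M 1 h \<and>
     (\<forall>n. \<forall>y\<in>M n. i n (p n y) = y + bM (n + 1) (h n y) + h (n - 1) (bM n y))"

definition perturbation ::
  "('r::ring_1 \<Rightarrow> 'm::ab_group_add \<Rightarrow> 'm) \<Rightarrow> (int \<Rightarrow> 'm set) \<Rightarrow> (int \<Rightarrow> 'm \<Rightarrow> 'm) \<Rightarrow> (int \<Rightarrow> 'm \<Rightarrow> 'm) \<Rightarrow> bool" where
  "perturbation s M b \<delta> \<longleftrightarrow> graded_map s M s M (-1) \<delta> \<and>
     (\<forall>n. \<forall>x\<in>M n. (b (n - 1) (b n x + \<delta> n x) + \<delta> (n - 1) (b n x + \<delta> n x)) = 0)"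

definition inverse_one_minus ::
  "('r::ring_1 \<Rightarrow> 'm::ab_group_add \<Rightarrow> 'm) \<Rightarrow> (int \<Rightarrow> 'm set) \<Rightarrow> (int \<Rightarrow> 'm \<Rightarrow> 'm) \<Rightarrow> (int \<Rightarrow> 'm \<Rightarrow> 'm) \<Rightarrow> (int \<Rightarrow> 'm \<Rightarrow> 'm) \<Rightarrow> bool" where
  "inverse_one_minus s M \<delta> h g \<longleftrightarrow> graded_map s M s M 0 g \<and>
     (\<forall>n. \<forall>x\<in>M n. g n (x - \<delta> (n + 1) (h n x)) = x \<and> g n x - \<delta> (n + 1) (h n (g n x)) = x)"

definition small_perturbation ::
  "('r::ring_1 \<Rightarrow> 'm::ab_group_add \<Rightarrow> 'm) \<Rightarrow> (int \<Rightarrow> 'm set) \<Rightarrow> (int \<Rightarrow> 'm \<Rightarrow> 'm) \<Rightarrow> (int \<Rightarrow> 'm \<Rightarrow> 'm) \<Rightarrow> (int \<Rightarrow> 'm \<Rightarrow> 'm) \<Rightarrow> bool" where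
  "small_perturbation s M b h \<delta> \<longleftrightarrow> perturbation s M b \<delta> \<and> (\<exists>g. inverse_one_minus s M \<delta> h g)"

text \<open>A = (1 - delta h)^{-1} delta, of degree -1, given the inverse g.\<close>
definition pertA :: "(int \<Rightarrow> 'm \<Rightarrow> 'm) \<Rightarrow> (int \<Rightarrow> 'm \<Rightarrow> 'm) \<Rightarrow> int \<Rightarrow> 'm \<Rightarrow> 'm" where
  "pertA g \<delta> n x = g (n - 1) (\<delta> n x)"

definition i_inf :: "(int \<Rightarrow> 'l \<Rightarrow> 'm::ab_group_add) \<Rightarrow> (int \<Rightarrow> 'm \<Rightarrow> 'm) \<Rightarrow> (int \<Rightarrow> 'm \<Rightarrow> 'm) \<Rightarrow> (int \<Rightarrow> 'm \<Rightarrow> 'm) \<Rightarrow> int \<Rightarrow> 'l \<Rightarrow> 'm" where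
  "i_inf i h g \<delta> n x = i n x + h (n - 1) (pertA g \<delta> n (i n x))"

definition p_inf :: "(int \<Rightarrow> 'm \<Rightarrow> 'l::ab_group_add) \<Rightarrow> (int \<Rightarrow> 'm \<Rightarrow> 'm) \<Rightarrow> (int \<Rightarrow> 'm \<Rightarrow> 'm) \<Rightarrow> (int \<Rightarrow> 'm \<Rightarrow> 'm) \<Rightarrow> int \<Rightarrow> 'm \<Rightarrow> 'l" where
  "p_inf p h g \<delta> n y = p n y + p n (pertA g \<delta> (n + 1) (h n y))"

definition b_inf :: "(int \<Rightarrow> 'l::ab_group_add \<Rightarrow> 'l) \<Rightarrow> (int \<Rightarrow> 'l \<Rightarrow> 'm) \<Rightarrow> (int \<Rightarrow> 'm \<Rightarrow> 'l) \<Rightarrow> (int \<Rightarrow> 'm \<Rightarrow> 'm) \<Rightarrow> (int \<Rightarrow> 'm \<Rightarrow> 'm) \<Rightarrow> int \<Rightarrow> 'l \<Rightarrow> 'l" where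
  "b_inf bL i p g \<delta> n x = bL n x + p (n - 1) (pertA g \<delta> n (i n x))"

end

theory Submission
  imports Defs
begin

lemma gmod_neg:
  assumes "graded_module s M" "x \<in> M n" shows "- x \<in> M n"
proof -
  have im: "is_module s" using assms(1) unfolding graded_module_def by simp
  have "s (-1) x \<in> M n" using assms unfolding graded_module_def by blast
  moreover have "s (-1) x = - x"
  proof -
    have "s (1 + -1) x = s 1 x + s (-1) x" using im unfolding is_module_def by blast
    then have "s 0 x = x + s (-1) x" using im unfolding is_module_def by simp
    moreover have "s (0 + 0) x = s 0 x + s 0 x" using im unfolding is_module_def by blast
    ultimately show ?thesis by (simp add: eq_neg_iff_add_eq_0 add.commute)
  qed
  ultimately show ?thesis by simp
qed

lemma gmod_add: "graded_module s M \<Longrightarrow> x \<in> M n \<Longrightarrow> y \<in> M n \<Longrightarrow> x + y \<in> M n"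
  unfolding graded_module_def by blast

lemma gmod_zero: "graded_module s M \<Longrightarrow> 0 \<in> M n"
  unfolding graded_module_def by blast

lemma gmod_diff: "graded_module s M \<Longrightarrow> x \<in> M n \<Longrightarrow> y \<in> M n \<Longrightarrow> x - y \<in> M n"
  using gmod_add gmod_neg by (metis diff_conv_add_uminus)

lemma gmap_mem: "graded_map s M s' M' d f \<Longrightarrow> x \<in> M k \<Longrightarrow> m = k + d \<Longrightarrow> f k x \<in> M' m"
  unfolding graded_map_def by blast

lemma gmap_add: "graded_map s M s' M' d f \<Longrightarrow> x \<in> M k \<Longrightarrow> y \<in> M k \<Longrightarrow> f k (x + y) = f k x + f k y"
  unfolding graded_map_def by blast

lemma gmap_zero: "graded_map s M s' M' d f \<Longrightarrow> graded_module s M \<Longrightarrow> f k 0 = 0"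
  using gmap_add[of s M s' M' d f 0 k 0] gmod_zero[of s M k] by simp

lemma gmap_diff: "graded_map s M s' M' d f \<Longrightarrow> graded_module s M \<Longrightarrow> x \<in> M k \<Longrightarrow> y \<in> M k
   \<Longrightarrow> f k (x - y) = f k x - f k y"
  using gmap_add[of s M s' M' d f "x - y" k y] gmod_diff[of s M x k y] by (simp add: eq_diff_eq)

lemma gmap_neg: "graded_map s M s' M' d f \<Longrightarrow> graded_module s M \<Longrightarrow> x \<in> M k
   \<Longrightarrow> f k (- x) = - f k x"
  using gmap_diff[of s M s' M' d f 0 k x] gmap_zero[of s M s' M' d f k] gmod_zero[of s M k] by simp


theorem lemma1p7:
  fixes sL :: "'r::ring_1 \<Rightarrow> 'l::ab_group_add \<Rightarrow> 'l"
    and sM :: "'r \<Rightarrow> 'm::ab_group_add \<Rightarrow> 'm"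
    and L :: "int \<Rightarrow> 'l set" and M :: "int \<Rightarrow> 'm set"
    and bL :: "int \<Rightarrow> 'l \<Rightarrow> 'l" and bM :: "int \<Rightarrow> 'm \<Rightarrow> 'm"
    and i :: "int \<Rightarrow> 'l \<Rightarrow> 'm" and p :: "int \<Rightarrow> 'm \<Rightarrow> 'l"
    and h \<delta> g :: "int \<Rightarrow> 'm \<Rightarrow> 'm"
  assumes HR: "hr_datum sL L bL sM M bM i p h"
    and small: "small_perturbation sM M bM h \<delta>"
    and inv: "inverse_one_minus sM M \<delta> h g"
  shows "(\<forall>n. \<forall>x\<in>L n.
           b_inf bL i p g \<delta> n (p_inf p h g \<delta> n (i n x) - x)
           = p_inf p h g \<delta> (n - 1) (i (n - 1) (bL n x)) - bL n x)
       \<and> (\<forall>n. \<forall>x\<in>L n.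
           p (n - 1) (i_inf i h g \<delta> (n - 1) (b_inf bL i p g \<delta> n x)) - b_inf bL i p g \<delta> n x
           = bL n (p n (i_inf i h g \<delta> n x) - x))"
proof -
  have gL: "graded_module sL L" and gM: "graded_module sM M"
    using HR unfolding hr_datum_def chain_complex_def by auto
  have mbL: "graded_map sL L sL L (-1) bL" and mbM: "graded_map sM M sM M (-1) bM"
    using HR unfolding hr_datum_def chain_complex_def by auto
  have mi: "graded_map sL L sM M 0 i" and mp: "graded_map sM M sL L 0 p"
    using HR unfolding hr_datum_def chain_map_def by auto
  have mh: "graded_map sM M sM M 1 h" using HR unfolding hr_datum_def by auto
  have md: "graded_map sM M sM M (-1) \<delta>" using small unfolding small_perturbation_def perturbation_def by auto
  have mg: "graded_map sM M sM M 0 g" using inv unfolding inverse_one_minus_def by auto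
  have ci: "\<And>n x. x \<in> L n \<Longrightarrow> i (n - 1) (bL n x) = bM n (i n x)"
    using HR unfolding hr_datum_def chain_map_def by auto
  have cp: "\<And>n x. x \<in> M n \<Longrightarrow> p (n - 1) (bM n x) = bL n (p n x)"
    using HR unfolding hr_datum_def chain_map_def by auto
  have bb: "\<And>n x. x \<in> M n \<Longrightarrow> bM (n - 1) (bM n x) = 0"
    using HR unfolding hr_datum_def chain_complex_def by auto
  have hom: "\<And>n y. y \<in> M n \<Longrightarrow> i n (p n y) = y + bM (n + 1) (h n y) + h (n - 1) (bM n y)"
    using HR unfolding hr_datum_def by auto
  have pert: "\<And>n x. x \<in> M n \<Longrightarrow> bM (n - 1) (bM n x + \<delta> n x) + \<delta> (n - 1) (bM n x + \<delta> n x) = 0"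
    using small unfolding small_perturbation_def perturbation_def by auto
  have inv1: "\<And>n x. x \<in> M n \<Longrightarrow> g n (x - \<delta> (n + 1) (h n x)) = x"
    using inv unfolding inverse_one_minus_def by auto
  have inv2: "\<And>n x. x \<in> M n \<Longrightarrow> g n x - \<delta> (n + 1) (h n (g n x)) = x"
    using inv unfolding inverse_one_minus_def by auto
  note mem = gmap_mem[OF mbL] gmap_mem[OF mbM] gmap_mem[OF mi] gmap_mem[OF mp]
    gmap_mem[OF mh] gmap_mem[OF md] gmap_mem[OF mg]
    gmod_add[OF gL] gmod_add[OF gM] gmod_diff[OF gL] gmod_diff[OF gM]
    gmod_neg[OF gL] gmod_neg[OF gM] gmod_zero[OF gL] gmod_zero[OF gM]
  note lin = gmap_add[OF mbL] gmap_add[OF mbM] gmap_add[OF mi] gmap_add[OF mp]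
    gmap_add[OF mh] gmap_add[OF md] gmap_add[OF mg]
    gmap_diff[OF mbL gL] gmap_diff[OF mbM gM] gmap_diff[OF mi gL] gmap_diff[OF mp gM]
    gmap_diff[OF mh gM] gmap_diff[OF md gM] gmap_diff[OF mg gM]
    gmap_neg[OF mbL gL] gmap_neg[OF mbM gM] gmap_neg[OF mi gL] gmap_neg[OF mp gM]
    gmap_neg[OF mh gM] gmap_neg[OF md gM] gmap_neg[OF mg gM]
    gmap_zero[OF mbL gL] gmap_zero[OF mbM gM] gmap_zero[OF mi gL] gmap_zero[OF mp gM]
    gmap_zero[OF mh gM] gmap_zero[OF md gM] gmap_zero[OF mg gM]
  have key: "bM (n - 1) (g (n - 1) (\<delta> n y)) + g (n - 1 - 1) (\<delta> (n - 1) (bM n y))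
      + g (n - 1 - 1) (\<delta> (n - 1) (i (n - 1) (p (n - 1) (g (n - 1) (\<delta> n y))))) = 0"
    if y: "y \<in> M n" for n y
  proof -
    define u where "u = g (n - 1) (\<delta> n y)"
    define w where "w = y + h (n - 1) u"
    have um: "u \<in> M (n - 1)" unfolding u_def using y by (simp add: mem)
    have wm: "w \<in> M n" unfolding w_def using y um by (simp add: mem)
    have yw: "y = w - h (n - 1) u" unfolding w_def by simp
    have dw: "\<delta> n w = u"
    proof -
      have "u - \<delta> n (h (n - 1) u) = \<delta> n y"
        using inv2[of "\<delta> n y" "n - 1"] y unfolding u_def by (simp add: mem)
      then show ?thesis unfolding w_def using y um by (simp add: mem lin algebra_simps)
    qed
    define Z where "Z = bM (n - 1) u + g (n - 1 - 1) (\<delta> (n - 1) (bM n y))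
      + g (n - 1 - 1) (\<delta> (n - 1) (i (n - 1) (p (n - 1) u)))"
    define q1 where "q1 = \<delta> (n - 1) (bM n y)"
    define q2 where "q2 = \<delta> (n - 1) (i (n - 1) (p (n - 1) u))"
    have q1m: "q1 \<in> M (n - 1 - 1)" unfolding q1_def using y by (simp add: mem)
    have q2m: "q2 \<in> M (n - 1 - 1)" unfolding q2_def using um by (simp add: mem)
    have bum: "bM (n - 1) u \<in> M (n - 1 - 1)" using um by (simp add: mem)
    have Zm: "Z \<in> M (n - 1 - 1)" unfolding Z_def using y um by (simp add: mem)
    have g1: "g (n - 1 - 1) q1 - \<delta> (n - 1) (h (n - 1 - 1) (g (n - 1 - 1) q1)) = q1"
      using inv2[OF q1m] by simp
    have g2: "g (n - 1 - 1) q2 - \<delta> (n - 1) (h (n - 1 - 1) (g (n - 1 - 1) q2)) = q2"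
      using inv2[OF q2m] by simp
    have "Z - \<delta> (n - 1) (h (n - 1 - 1) Z)
        = (bM (n - 1) u - \<delta> (n - 1) (h (n - 1 - 1) (bM (n - 1) u)))
          + (g (n - 1 - 1) q1 - \<delta> (n - 1) (h (n - 1 - 1) (g (n - 1 - 1) q1)))
          + (g (n - 1 - 1) q2 - \<delta> (n - 1) (h (n - 1 - 1) (g (n - 1 - 1) q2)))"
      unfolding Z_def q1_def[symmetric] q2_def[symmetric] using q1m q2m bum
      by (simp add: mem lin algebra_simps)
    also have "\<dots> = bM (n - 1) u - \<delta> (n - 1) (h (n - 1 - 1) (bM (n - 1) u)) + q1 + q2"
      using g1 g2 by simp
    also have "\<dots> = 0"
    proof -
      have hp: "i (n - 1) (p (n - 1) u) = u + bM n (h (n - 1) u) + h (n - 1 - 1) (bM (n - 1) u)"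
        using hom[OF um] by simp
      have e1: "q1 = \<delta> (n - 1) (bM n w) - \<delta> (n - 1) (bM n (h (n - 1) u))"
        unfolding q1_def yw using wm um by (simp add: mem lin)
      have e2: "q2 = \<delta> (n - 1) u + \<delta> (n - 1) (bM n (h (n - 1) u))
          + \<delta> (n - 1) (h (n - 1 - 1) (bM (n - 1) u))"
        unfolding q2_def hp using um by (simp add: mem lin)
      have e3: "bM (n - 1) u + \<delta> (n - 1) (bM n w) + \<delta> (n - 1) u = 0"
        using pert[OF wm] bb[OF wm] wm um unfolding dw by (simp add: mem lin algebra_simps)
      show ?thesis unfolding e1 e2 using e3 by (simp add: algebra_simps)
    qed
    finally have "Z - \<delta> (n - 1) (h (n - 1 - 1) Z) = 0" .
    then have "Z = g (n - 1 - 1) 0" using inv1[OF Zm] by simp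
    then have "Z = 0" by (simp add: lin)
    then show ?thesis unfolding Z_def u_def .
  qed
have c1: "b_inf bL i p g \<delta> n (p_inf p h g \<delta> n (i n x) - x)
           = p_inf p h g \<delta> (n - 1) (i (n - 1) (bL n x)) - bL n x" if x: "x \<in> L n" for n x
  proof -
    define y where "y = i n x"
    have ym: "y \<in> M n" unfolding y_def using x by (simp add: mem)
    define u where "u = g n (\<delta> (n + 1) (h n y))"
    have um: "u \<in> M n" unfolding u_def using ym by (simp add: mem)
    have K0: "bM n u + g (n - 1) (\<delta> n (bM (n + 1) (h n y)))
      + g (n - 1) (\<delta> n (i n (p n u))) = 0"
      using key[of "h n y" "n + 1"] ym unfolding u_def by (simp add: mem)
    have hy: "bM (n + 1) (h n y) = i n (p n y) - y - h (n - 1) (bM n y)"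
      using hom[OF ym] by (simp add: algebra_simps)
    have hu: "i n (p n u) = u + bM (n + 1) (h n u) + h (n - 1) (bM n u)"
      using hom[OF um] .
    have K: "p (n - 1) (bM n u) + p (n - 1) (g (n - 1) (\<delta> n (i n (p n y))))
      - p (n - 1) (g (n - 1) (\<delta> n y)) - p (n - 1) (g (n - 1) (\<delta> n (h (n - 1) (bM n y))))
      + p (n - 1) (g (n - 1) (\<delta> n (i n (p n u)))) = 0"
    proof -
      have "p (n - 1) (bM n u + g (n - 1) (\<delta> n (bM (n + 1) (h n y)))
        + g (n - 1) (\<delta> n (i n (p n u)))) = 0" using K0 by (simp add: lin)
      then show ?thesis unfolding hy using ym um by (simp add: mem lin algebra_simps)
    qed
    have pu: "pertA g \<delta> (n + 1) (h n y) = u" unfolding pertA_def u_def by simp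
    have "b_inf bL i p g \<delta> n (p_inf p h g \<delta> n (i n x) - x)
       = bL n (p n y) + bL n (p n u) - bL n x
         + p (n - 1) (g (n - 1) (\<delta> n (i n (p n y)))) + p (n - 1) (g (n - 1) (\<delta> n (i n (p n u))))
         - p (n - 1) (g (n - 1) (\<delta> n y))"
      unfolding p_inf_def pu[unfolded y_def] unfolding y_def[symmetric] b_inf_def pertA_def
      using x ym um by (simp add: mem lin y_def[symmetric] algebra_simps)
    also have "\<dots> = p (n - 1) (bM n y) + p (n - 1) (g (n - 1) (\<delta> n (h (n - 1) (bM n y)))) - bL n x"
      using K cp[OF ym] cp[OF um] by (simp add: algebra_simps)
    also have "\<dots> = p_inf p h g \<delta> (n - 1) (i (n - 1) (bL n x)) - bL n x"
      unfolding p_inf_def pertA_def ci[OF x] y_def by simp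
    finally show ?thesis .
  qed
have c2: "p (n - 1) (i_inf i h g \<delta> (n - 1) (b_inf bL i p g \<delta> n x)) - b_inf bL i p g \<delta> n x
           = bL n (p n (i_inf i h g \<delta> n x) - x)" if x: "x \<in> L n" for n x
  proof -
    define y where "y = i n x"
    have ym: "y \<in> M n" unfolding y_def using x by (simp add: mem)
    define v where "v = g (n - 1) (\<delta> n y)"
    have vm: "v \<in> M (n - 1)" unfolding v_def using ym by (simp add: mem)
    have K0: "bM (n - 1) v + g (n - 1 - 1) (\<delta> (n - 1) (bM n y))
      + g (n - 1 - 1) (\<delta> (n - 1) (i (n - 1) (p (n - 1) v))) = 0"
      using key[OF ym] unfolding v_def .
    have hv: "i (n - 1) (p (n - 1) v) = v + bM n (h (n - 1) v) + h (n - 1 - 1) (bM (n - 1) v)"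
      using hom[OF vm] by simp
    have K: "p (n - 1) (h (n - 1 - 1) (bM (n - 1) v))
      + p (n - 1) (h (n - 1 - 1) (g (n - 1 - 1) (\<delta> (n - 1) (bM n y))))
      + p (n - 1) (h (n - 1 - 1) (g (n - 1 - 1) (\<delta> (n - 1) (i (n - 1) (p (n - 1) v))))) = 0"
    proof -
      have "p (n - 1) (h (n - 1 - 1) (bM (n - 1) v + g (n - 1 - 1) (\<delta> (n - 1) (bM n y))
      + g (n - 1 - 1) (\<delta> (n - 1) (i (n - 1) (p (n - 1) v))))) = 0" using K0 by (simp add: lin)
      then show ?thesis using ym vm by (simp add: mem lin)
    qed
    have iv: "i_inf i h g \<delta> n x = y + h (n - 1) v" unfolding i_inf_def pertA_def y_def v_def ..
    have bv: "b_inf bL i p g \<delta> n x = bL n x + p (n - 1) v" unfolding b_inf_def pertA_def y_def v_def ..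
    have "p (n - 1) (i_inf i h g \<delta> (n - 1) (b_inf bL i p g \<delta> n x)) - b_inf bL i p g \<delta> n x
       = p (n - 1) (bM n y) + p (n - 1) (i (n - 1) (p (n - 1) v))
         + p (n - 1) (h (n - 1 - 1) (g (n - 1 - 1) (\<delta> (n - 1) (bM n y))))
         + p (n - 1) (h (n - 1 - 1) (g (n - 1 - 1) (\<delta> (n - 1) (i (n - 1) (p (n - 1) v)))))
         - bL n x - p (n - 1) v"
      unfolding bv unfolding i_inf_def pertA_def
      using x ym vm by (simp add: mem lin ci y_def[symmetric])
    also have "\<dots> = p (n - 1) (bM n y) + p (n - 1) (bM n (h (n - 1) v)) - bL n x"
      using K unfolding hv using vm by (simp add: mem lin algebra_simps)
    also have "\<dots> = bL n (p n (i_inf i h g \<delta> n x) - x)"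
      unfolding iv using x ym vm cp[OF ym] cp[of "h (n - 1) v" n]
      by (simp add: mem lin)
    finally show ?thesis .
  qed
  show ?thesis using c1 c2 by blast
qed

end
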